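(* Let $\theta\in\mathbb{F}_{q^3}^*$. Then $\mathrm{Pr}(\Pi_\theta)=\mathcal S_{\theta^2}$ and $\mathrm{Sp}(\Pi_\theta)=\mathcal S_{-\theta^2}$.
   Context: Let $q$ be a prime power, $\mathbb{F}_{q^3}^*=\mathbb{F}_{q^3}\setminus\{0\}$. Points of $\mathrm{PG}(2,q^3)$ have homogeneous coordinates $(x,y,z)$ and lines $[a,b,c]$. Let $T=(0,0,1)$ and let $m_T$ be the line $[0,0,1]$ (joining $(1,0,0)$ and $(0,1,0)$). For $\theta\in\mathbb{F}_{q^3}^*$ let $\mathcal S_\theta=\{(x\theta,x^q,0):x\in\mathbb{F}_{q^3}^*\}\subset m_T$ and let $\Pi_\theta=\{(r\theta^{q+1},r^q,r^{q^2}\theta):r\in\mathbb{F}_{q^3}^*\}$, which is a subplane of order $q$ (an $\mathbb{F}_q$-plane); its lines are the lines meeting it in $q+1$ points. For an $\mathbb{F}_q$-plane $\mathcal B$ not containing $T$ and with no line equal to $m_T$, the projection is $\mathrm{Pr}(\mathcal B)=\{TP\cap m_T: P\text{ a point of }\mathcal B\}$ and the splash is $\mathrm{Sp}(\mathcal B)=\{\ell\cap m_T:\ell\text{ a line of }\mathcal B\}$. *)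

theory Defs
  imports Main "HOL-Computational_Algebra.Primes"
begin

text \<open>Homogeneous coordinates: nonzero triples over a field; a point (or line) of
PG(2,F) is the set of all nonzero scalar multiples of a nonzero triple.\<close>

type_synonym 'a vec3 = "'a \<times> 'a \<times> 'a"

definition smul3 :: "'a::field \<Rightarrow> 'a vec3 \<Rightarrow> 'a vec3" where
  "smul3 c v = (case v of (x,y,z) \<Rightarrow> (c*x, c*y, c*z))"

definition proj :: "'a::field vec3 \<Rightarrow> 'a vec3 set" where
  "proj v = {smul3 c v | c. c \<noteq> 0}"

definition pg_points :: "'a::field vec3 set set" where
  "pg_points = {proj v | v. v \<noteq> (0,0,0)}"

text \<open>Lines are represented the same way, by their (dual) coordinates [a,b,c].\<close>
definition pg_lines :: "'a::field vec3 set set" where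
  "pg_lines = {proj v | v. v \<noteq> (0,0,0)}"

definition dot3 :: "'a::field vec3 \<Rightarrow> 'a vec3 \<Rightarrow> 'a" where
  "dot3 v w = (case v of (x,y,z) \<Rightarrow> case w of (a,b,c) \<Rightarrow> a*x + b*y + c*z)"

definition cross3 :: "'a::field vec3 \<Rightarrow> 'a vec3 \<Rightarrow> 'a vec3" where
  "cross3 v w = (case v of (x1,y1,z1) \<Rightarrow> case w of (x2,y2,z2) \<Rightarrow>
      (y1*z2 - z1*y2, z1*x2 - x1*z2, x1*y2 - y1*x2))"

definition incid :: "'a::field vec3 set \<Rightarrow> 'a vec3 set \<Rightarrow> bool" where
  "incid P L \<longleftrightarrow> (\<exists>v\<in>P. \<exists>w\<in>L. dot3 v w = 0)"

definition join :: "'a::field vec3 set \<Rightarrow> 'a vec3 set \<Rightarrow> 'a vec3 set" where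
  "join P Q = proj (cross3 (SOME v. v \<in> P) (SOME w. w \<in> Q))"

definition meet :: "'a::field vec3 set \<Rightarrow> 'a vec3 set \<Rightarrow> 'a vec3 set" where
  "meet L M = proj (cross3 (SOME v. v \<in> L) (SOME w. w \<in> M))"

definition ptT :: "'a::field vec3 set" where "ptT = proj (0,0,1)"
definition lineT :: "'a::field vec3 set" where "lineT = proj (0,0,1)"

definition S_set :: "nat \<Rightarrow> 'a::field \<Rightarrow> 'a vec3 set set" where
  "S_set q \<theta> = {proj (x*\<theta>, x^q, 0) | x. x \<noteq> 0}"

definition Pi_set :: "nat \<Rightarrow> 'a::field \<Rightarrow> 'a vec3 set set" where
  "Pi_set q \<theta> = {proj (r*\<theta>^(q+1), r^q, r^(q^2)*\<theta>) | r. r \<noteq> 0}"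

text \<open>Lines of an F_q-plane B: lines of PG(2,q^3) meeting B in q+1 points.\<close>
definition plane_lines :: "nat \<Rightarrow> 'a::field vec3 set set \<Rightarrow> 'a vec3 set set" where
  "plane_lines q B = {L \<in> pg_lines. card {P \<in> B. incid P L} = q + 1}"

definition projection :: "'a::field vec3 set set \<Rightarrow> 'a vec3 set set" where
  "projection B = {meet (join ptT P) lineT | P. P \<in> B}"

definition splash :: "nat \<Rightarrow> 'a::field vec3 set set \<Rightarrow> 'a vec3 set set" where
  "splash q B = {meet L lineT | L. L \<in> plane_lines q B}"

end

theory Submission imports Defs "HOL-Computational_Algebra.Polynomial" begin

lemma smul3_simp[simp]: "smul3 c (x,y,z) = (c*x,c*y,c*z)" by (simp add: smul3_def)

lemma smul3_smul3: "smul3 d (smul3 c v) = smul3 (d*c) v"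
  by (cases v) (auto simp: mult.assoc)

lemma proj_smul: assumes "(c::'a::field) \<noteq> 0" shows "proj (smul3 c v) = proj v"
proof -
  have "proj (smul3 c v) \<subseteq> proj v" unfolding proj_def using assms
    by (auto simp: smul3_smul3)
  moreover have "proj v \<subseteq> proj (smul3 c v)" unfolding proj_def
  proof (clarsimp)
    fix d :: 'a assume "d \<noteq> 0"
    then show "\<exists>e. smul3 d v = smul3 e (smul3 c v) \<and> e \<noteq> 0"
      using assms by (intro exI[of _ "d / c"]) (simp add: smul3_smul3)
  qed
  ultimately show ?thesis by blast
qed

lemma proj_eq_iff: "proj v = proj w \<longleftrightarrow> (\<exists>c. (c::'a::field) \<noteq> 0 \<and> w = smul3 c v)"
proof
  assume "proj v = proj w"
  moreover have "w \<in> proj w" unfolding proj_def by (cases w) (auto intro: exI[of _ 1])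
  ultimately show "\<exists>c. c \<noteq> 0 \<and> w = smul3 c v" unfolding proj_def by auto
next
  assume "\<exists>c. c \<noteq> 0 \<and> w = smul3 c v"
  then show "proj v = proj w" using proj_smul by metis
qed

lemma some_proj: "\<exists>c. (c::'a::field) \<noteq> 0 \<and> (SOME x. x \<in> proj v) = smul3 c v"
proof -
  have "v \<in> proj v" unfolding proj_def by (cases v) (auto intro: exI[of _ 1])
  then have "(SOME x. x \<in> proj v) \<in> proj v" by (rule someI)
  then show ?thesis unfolding proj_def by auto
qed

lemma cross3_smul: "cross3 (smul3 c v) (smul3 d w) = smul3 (c*d) (cross3 v w)"
  by (cases v; cases w) (simp add: cross3_def algebra_simps)

lemma dot3_smul: "dot3 (smul3 c v) (smul3 d w) = c*d*dot3 v w"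
  by (cases v; cases w) (simp add: dot3_def algebra_simps)

lemma meet_proj: "meet (proj v) (proj (w::'a::field vec3)) = proj (cross3 v w)"
proof -
  obtain c where c: "c \<noteq> 0" "(SOME x. x \<in> proj v) = smul3 c v" using some_proj by blast
  obtain d where d: "d \<noteq> 0" "(SOME x. x \<in> proj w) = smul3 d w" using some_proj by blast
  show ?thesis unfolding meet_def c d cross3_smul using c d by (simp add: proj_smul)
qed

lemma join_proj: "join (proj v) (proj (w::'a::field vec3)) = proj (cross3 v w)"
  using meet_proj unfolding meet_def join_def by metis

lemma incid_proj: "incid (proj v) (proj (w::'a::field vec3)) \<longleftrightarrow> dot3 v w = 0"
proof
  assume "incid (proj v) (proj w)"
  then show "dot3 v w = 0" unfolding incid_def proj_def by (auto simp: dot3_smul)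
next
  assume "dot3 v w = 0"
  moreover have "v \<in> proj v" "w \<in> proj w" unfolding proj_def
    by (cases v, auto intro: exI[of _ 1]) (cases w, auto intro: exI[of _ 1])
  ultimately show "incid (proj v) (proj w)" unfolding incid_def by blast
qed

lemma parallel:
  fixes x n :: "'a::field vec3"
  assumes "cross3 x n = (0,0,0)" "n \<noteq> (0,0,0)"
  shows "\<exists>c. x = smul3 c n"
proof -
  obtain x1 x2 x3 where x: "x = (x1,x2,x3)" by (cases x)
  obtain n1 n2 n3 where n: "n = (n1,n2,n3)" by (cases n)
  have e: "x2*n3 = x3*n2" "x3*n1 = x1*n3" "x1*n2 = x2*n1"
    using assms(1) unfolding x n cross3_def by auto
  show ?thesis
  proof (cases "n1 \<noteq> 0")
    case True
    then show ?thesis unfolding x n using e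
      by (intro exI[of _ "x1/n1"]) (auto simp: field_simps)
  next
    case F1: False
    show ?thesis
    proof (cases "n2 \<noteq> 0")
      case True
      then show ?thesis unfolding x n using e F1
        by (intro exI[of _ "x2/n2"]) (auto simp: field_simps)
    next
      case False
      then have "n3 \<noteq> 0" using F1 assms(2) n by auto
      then show ?thesis unfolding x n using e F1 False
        by (intro exI[of _ "x3/n3"]) (auto simp: field_simps)
    qed
  qed
qed

lemma bac_cab: "cross3 w (cross3 v1 v2) = (0,0,0)" if "dot3 v1 w = 0" "dot3 v2 w = 0"
  for w v1 v2 :: "'a::field vec3"
proof -
  obtain a b c where w: "w = (a,b,c)" by (cases w)
  obtain x1 y1 z1 where v1: "v1 = (x1,y1,z1)" by (cases v1)
  obtain x2 y2 z2 where v2: "v2 = (x2,y2,z2)" by (cases v2)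
  have h1: "a*x1 + b*y1 + c*z1 = 0" "a*x2 + b*y2 + c*z2 = 0" using that unfolding w v1 v2 dot3_def by auto
  have "cross3 w (cross3 v1 v2) = ((a*x2+b*y2+c*z2)*x1 - (a*x1+b*y1+c*z1)*x2,
     (a*x2+b*y2+c*z2)*y1 - (a*x1+b*y1+c*z1)*y2, (a*x2+b*y2+c*z2)*z1 - (a*x1+b*y1+c*z1)*z2)"
    unfolding w v1 v2 cross3_def by (simp add: algebra_simps)
  then show ?thesis using h1 by simp
qed

lemma fiber_count:
  assumes "finite A" "\<And>x. x \<in> A \<Longrightarrow> card {y\<in>A. f y = f x} = k"
  shows "card A = k * card (f ` A)"
proof -
  have eq: "A = (\<Union>b\<in>f`A. {y\<in>A. f y = b})" by auto
  have "card (\<Union>b\<in>f`A. {y\<in>A. f y = b}) = (\<Sum>b\<in>f`A. card {y\<in>A. f y = b})"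
    by (rule card_UN_disjoint) (use assms(1) in auto)
  then have "card A = (\<Sum>b\<in>f`A. card {y\<in>A. f y = b})" using eq by simp
  also have "\<dots> = (\<Sum>b\<in>f`A. k)" using assms(2) by (intro sum.cong) auto
  finally show ?thesis by simp
qed

lemma roots_le:
  fixes p :: "'a::field poly"
  assumes "p \<noteq> 0" "degree p \<le> n" "\<And>x. x \<in> S \<Longrightarrow> poly p x = 0"
  shows "card S \<le> n"
proof -
  have "card S \<le> card {x. poly p x = 0}"
    by (rule card_mono[OF poly_roots_finite[OF assms(1)]]) (use assms(3) in auto)
  also have "\<dots> \<le> degree p" by (rule card_poly_roots_bound[OF assms(1)])
  finally show ?thesis using assms(2) by simp
qed

lemma roots_pow_le:
  fixes c :: "'a::field"
  assumes "n > 0" "\<And>x. x \<in> S \<Longrightarrow> x ^ n = c"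
  shows "card S \<le> n"
proof (rule roots_le[of "monom 1 n - [:c:]"])
  show "monom 1 n - [:c:] \<noteq> 0"
  proof
    assume "monom 1 n - [:c:] = 0"
    then have "coeff (monom 1 n - [:c:]) n = 0" by simp
    moreover obtain m where "n = Suc m" using assms(1) by (cases n) auto
    ultimately show False by (simp add: coeff_monom)
  qed
  show "degree (monom 1 n - [:c:]) \<le> n"
    by (rule order.trans[OF degree_diff_le]) (auto simp: degree_monom_le)
  show "poly (monom 1 n - [:c:]) x = 0" if "x \<in> S" for x
    using assms(2)[OF that] by (simp add: poly_monom)
qed

context
  fixes q :: nat
  assumes addq: "\<And>x y::'a::{field,finite}. (x+y)^q = x^q + y^q"
    and fix3: "\<And>x::'a. x^(q^3) = x"
    and q2: "q \<ge> 2"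
    and cardq: "card (UNIV :: 'a set) = q^3"
begin

lemma subq: "((x::'a) - y)^q = x^q - y^q"
  using addq[of "x-y" y] by (simp add: algebra_simps)

lemma fixqq: "((x::'a)^(q^2))^q = x"
proof -
  have "q^2*q = q^3" by (simp add: power2_eq_square power3_eq_cube)
  moreover have "(x^(q^2))^q = x^(q^2*q)" by (simp add: power_mult)
  ultimately show ?thesis using fix3 by simp
qed

lemma powqq: "((x::'a)^q)^q = x^(q^2)"
  by (simp add: power2_eq_square power_mult)

lemma nat_cube: "(q-1)*(q^2+q+1) = q^3 - 1"
proof -
  obtain r where r: "q = Suc r" using q2 by (cases q) auto
  show ?thesis unfolding r by (simp add: algebra_simps power2_eq_square power3_eq_cube)
qed

lemma pow_card1: "(x::'a) \<noteq> 0 \<Longrightarrow> x^(q^3-1) = 1"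
proof -
  assume x: "x \<noteq> 0"
  obtain m where m: "q^3 = Suc m" using q2 by (cases "q^3") auto
  then have "x * x^(q^3-1) = x^(q^3)" by simp
  then have "x * x^(q^3-1) = x * 1" using fix3 by simp
  then show ?thesis using x by simp
qed

lemma Gcard: "card {c::'a. c \<noteq> 0 \<and> c^q = c} = q - 1"
proof -
  define G where "G = {c::'a. c \<noteq> 0 \<and> c^(q-1) = 1}"
  have qq: "c^q = c * c^(q-1)" for c :: 'a
  proof -
    obtain r where r: "q = Suc r" using q2 by (cases q) auto
    show ?thesis unfolding r by simp
  qed
  have GG: "{c::'a. c \<noteq> 0 \<and> c^q = c} = G" unfolding G_def
    by (auto simp: qq)
  define U where "U = (UNIV - {0::'a})"
  define h where "h = (\<lambda>x::'a. x^(q-1))"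
  have fib: "card {y\<in>U. h y = h x} = card G" if "x \<in> U" for x
  proof -
    have x: "x \<noteq> 0" using that U_def by simp
    have "{y\<in>U. h y = h x} = (\<lambda>c. c*x) ` G"
    proof (intro set_eqI iffI)
      fix y assume "y \<in> {y\<in>U. h y = h x}"
      then have y: "y \<noteq> 0" "y^(q-1) = x^(q-1)" unfolding U_def h_def by auto
      have "(y/x)^(q-1) = 1" using y x by (simp add: power_divide)
      then have "y/x \<in> G" using y x unfolding G_def by simp
      moreover have "y = (y/x)*x" using x by simp
      ultimately show "y \<in> (\<lambda>c. c*x) ` G" by blast
    next
      fix y assume "y \<in> (\<lambda>c. c*x) ` G"
      then obtain c where "c \<in> G" "y = c*x" by blast
      then show "y \<in> {y\<in>U. h y = h x}" using x unfolding G_def U_def h_def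
        by (simp add: power_mult_distrib)
    qed
    moreover have "inj_on (\<lambda>c. c*x) G" using x by (intro inj_onI) simp
    ultimately show ?thesis by (simp add: card_image)
  qed
  have cU: "card U = q^3 - 1" unfolding U_def using cardq
    by (simp add: card_Diff_singleton)
  have main: "card U = card G * card (h ` U)"
    by (rule fiber_count) (use fib in auto)
  have img: "card (h ` U) \<le> q^2+q+1"
  proof (rule roots_pow_le[where c=1])
    fix y assume "y \<in> h ` U"
    then obtain x where x: "x \<noteq> 0" "y = x^(q-1)" unfolding U_def h_def by auto
    have "y^(q^2+q+1) = x^((q-1)*(q^2+q+1))" using x by (simp only: power_mult)
    also have "\<dots> = 1" using nat_cube pow_card1[OF x(1)] by simp
    finally show "y^(q^2+q+1) = 1" .
  qed simp
  have Gle: "card G \<le> q - 1"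
    by (rule roots_pow_le[where c=1]) (use q2 in \<open>auto simp: G_def\<close>)
  have "(q-1)*(q^2+q+1) = card G * card (h ` U)" using main cU nat_cube by simp
  also have "\<dots> \<le> card G * (q^2+q+1)" using img by (rule mult_le_mono2)
  finally have "(q-1)*(q^2+q+1) \<le> card G * (q^2+q+1)" .
  then have "q - 1 \<le> card G" by (subst (asm) mult_le_cancel2) simp
  then show ?thesis using GG Gle by simp
qed

lemma powq2_add: "((x::'a)+y)^(q^2) = x^(q^2) + y^(q^2)"
  by (simp flip: powqq add: addq)

lemma Tr_add: "((x::'a)+y) + (x+y)^q + (x+y)^(q^2) = (x + x^q + x^(q^2)) + (y + y^q + y^(q^2))"
  by (simp add: addq powq2_add algebra_simps)

lemma Tr_q: "((x::'a) + x^q + x^(q^2))^q = x + x^q + x^(q^2)"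
  by (simp add: addq powqq fixqq algebra_simps)

lemma Kcard: "card {x::'a. x + x^q + x^(q^2) = 0} = q^2"
proof -
  define Tr where "Tr = (\<lambda>x::'a. x + x^q + x^(q^2))"
  define K where "K = {x::'a. Tr x = 0}"
  have TrA: "Tr (x+y) = Tr x + Tr y" for x y unfolding Tr_def by (rule Tr_add)
  have TrS: "Tr (y - x) = Tr y - Tr x" for x y using TrA[of "y-x" x] by simp
  have fib: "card {y\<in>UNIV. Tr y = Tr x} = card K" for x
  proof -
    have "{y\<in>UNIV. Tr y = Tr x} = (\<lambda>k. k + x) ` K"
    proof (intro set_eqI iffI)
      fix y assume "y \<in> {y\<in>UNIV. Tr y = Tr x}"
      then have "y - x \<in> K" unfolding K_def using TrS by simp
      then show "y \<in> (\<lambda>k. k + x) ` K" by (intro image_eqI[of _ _ "y - x"]) auto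
    next
      fix y assume "y \<in> (\<lambda>k. k + x) ` K"
      then show "y \<in> {y\<in>UNIV. Tr y = Tr x}" unfolding K_def using TrA by auto
    qed
    moreover have "inj_on (\<lambda>k. k + x) K" by (intro inj_onI) simp
    ultimately show ?thesis by (simp add: card_image)
  qed
  have main: "card (UNIV::'a set) = card K * card (Tr ` UNIV)"
    by (rule fiber_count) (use fib in auto)
  have img: "card (Tr ` UNIV) \<le> q"
  proof (rule roots_le[of "monom 1 q - monom 1 1"])
    show "monom 1 q - monom (1::'a) 1 \<noteq> 0"
    proof
      assume "monom 1 q - monom (1::'a) 1 = 0"
      then have "coeff (monom 1 q - monom (1::'a) 1) q = 0" by simp
      then show False using q2 by (simp add: coeff_monom)
    qed
    have "degree (monom (1::'a) 1) \<le> q" using degree_monom_le[of "1::'a" 1] q2 by linarith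
    then show "degree (monom 1 q - monom (1::'a) 1) \<le> q"
      by (intro degree_diff_le degree_monom_le)
    show "poly (monom 1 q - monom 1 1) y = 0" if "y \<in> Tr ` UNIV" for y
      using that Tr_q unfolding Tr_def by (auto simp: poly_monom)
  qed
  have Kle: "card K \<le> q^2"
  proof (rule roots_le[of "monom 1 1 + monom 1 q + monom 1 (q^2)"])
    have ne: "q^2 \<noteq> q" "q^2 \<noteq> 1" using q2 by (auto simp: power2_eq_square)
    show "monom 1 1 + monom 1 q + monom (1::'a) (q^2) \<noteq> 0"
    proof
      assume "monom 1 1 + monom 1 q + monom (1::'a) (q^2) = 0"
      then have "coeff (monom 1 1 + monom 1 q + monom (1::'a) (q^2)) (q^2) = 0" by simp
      then show False using ne by (simp add: coeff_monom)
    qed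
    have "q \<le> q^2" "1 \<le> q^2" using q2 by (auto simp: power2_eq_square)
    then have "degree (monom (1::'a) 1) \<le> q^2" "degree (monom (1::'a) q) \<le> q^2"
      using degree_monom_le[of "1::'a" 1] degree_monom_le[of "1::'a" q] by linarith+
    then show "degree (monom 1 1 + monom 1 q + monom (1::'a) (q^2)) \<le> q^2"
      by (intro degree_add_le degree_monom_le)
    show "poly (monom 1 1 + monom 1 q + monom 1 (q^2)) y = 0" if "y \<in> K" for y
      using that unfolding K_def Tr_def by (auto simp: poly_monom)
  qed
  have "q^2 * q \<le> card K * q" using main img cardq
    by (metis mult_le_mono2 power2_eq_square power3_eq_cube mult.assoc)
  then have "q^2 \<le> card K" using q2 by simp
  then show ?thesis using Kle unfolding K_def Tr_def by simp
qed


lemma proj_part: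
  assumes th: "\<theta> \<noteq> (0::'a)"
  shows "projection (Pi_set q \<theta>) = S_set q (\<theta>^2)"
proof -
  have key: "meet (join ptT (proj (r*\<theta>^(q+1), r^q, r^(q^2)*\<theta>))) lineT = proj (r*\<theta>^(q+1), r^q, 0)" for r :: 'a
    by (simp add: ptT_def lineT_def join_proj meet_proj cross3_def)
  have eq: "proj (r*\<theta>^(q+1), r^q, 0) = proj ((r/\<theta>)*\<theta>^2, (r/\<theta>)^q, 0)" for r :: 'a
    unfolding proj_eq_iff using th
    by (intro exI[of _ "1/\<theta>^q"]) (auto simp: power_divide power2_eq_square field_simps)
  show ?thesis
  proof (intro set_eqI iffI)
    fix X assume "X \<in> projection (Pi_set q \<theta>)"
    then obtain r where r: "r \<noteq> 0" "X = meet (join ptT (proj (r*\<theta>^(q+1), r^q, r^(q^2)*\<theta>))) lineT"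
      unfolding projection_def Pi_set_def by blast
    then have "X = proj ((r/\<theta>)*\<theta>^2, (r/\<theta>)^q, 0)" using key eq by simp
    moreover have "r/\<theta> \<noteq> 0" using r th by simp
    ultimately show "X \<in> S_set q (\<theta>^2)" unfolding S_set_def by blast
  next
    fix X assume "X \<in> S_set q (\<theta>^2)"
    then obtain x where x: "x \<noteq> 0" "X = proj (x*\<theta>^2, x^q, 0)" unfolding S_set_def by blast
    define r where "r = x*\<theta>"
    have "r \<noteq> 0" using x th r_def by simp
    moreover have "X = meet (join ptT (proj (r*\<theta>^(q+1), r^q, r^(q^2)*\<theta>))) lineT"
      using key eq[of r] x th r_def by simp
    ultimately show "X \<in> projection (Pi_set q \<theta>)"
      unfolding projection_def Pi_set_def by blast
  qed
qed

lemma splash_sub: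
  assumes th: "\<theta> \<noteq> (0::'a)"
  shows "splash q (Pi_set q \<theta>) \<subseteq> S_set q (- (\<theta>^2))"
proof
  fix X assume "X \<in> splash q (Pi_set q \<theta>)"
  then obtain L where L: "L \<in> plane_lines q (Pi_set q \<theta>)" "X = meet L lineT"
    unfolding splash_def by blast
  then obtain w where w: "w \<noteq> (0,0,0)" "L = proj w"
    and cA: "card {P \<in> Pi_set q \<theta>. incid P L} = q+1"
    unfolding plane_lines_def pg_lines_def by blast
  define A where "A = {P \<in> Pi_set q \<theta>. incid P L}"
  have "\<not> card A \<le> Suc 0" using cA q2 A_def by simp
  then obtain P1 P2 where P: "P1 \<in> A" "P2 \<in> A" "P1 \<noteq> P2"
    using card_le_Suc0_iff_eq[of A] by auto
  obtain r1 where r1: "r1 \<noteq> 0" "P1 = proj (r1*\<theta>^(q+1), r1^q, r1^(q^2)*\<theta>)"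
    using P(1) unfolding A_def Pi_set_def by blast
  obtain r2 where r2: "r2 \<noteq> 0" "P2 = proj (r2*\<theta>^(q+1), r2^q, r2^(q^2)*\<theta>)"
    using P(2) unfolding A_def Pi_set_def by blast
  define v1 where "v1 = (r1*\<theta>^(q+1), r1^q, r1^(q^2)*\<theta>)"
  define v2 where "v2 = (r2*\<theta>^(q+1), r2^q, r2^(q^2)*\<theta>)"
  have d1: "dot3 v1 w = 0" using P(1) r1 unfolding A_def v1_def w by (simp add: incid_proj)
  have d2: "dot3 v2 w = 0" using P(2) r2 unfolding A_def v2_def w by (simp add: incid_proj)
  define n where "n = cross3 v1 v2"
  have nz: "n \<noteq> (0,0,0)"
  proof
    assume "n = (0,0,0)"
    then have cz: "cross3 v1 v2 = (0,0,0)" using n_def by simp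
    have "v2 \<noteq> (0,0,0)" using r2 th unfolding v2_def by simp
    then obtain c where c: "v1 = smul3 c v2" using parallel[OF cz] by blast
    have "c \<noteq> 0" using c r1 th unfolding v1_def v2_def by auto
    then have "P2 = P1" using c r1 r2 unfolding v1_def v2_def by (metis proj_eq_iff)
    then show False using P(3) by simp
  qed
  have "cross3 w n = (0,0,0)" unfolding n_def by (rule bac_cab[OF d1 d2])
  then obtain c where c: "w = smul3 c n" using parallel nz by blast
  have c0: "c \<noteq> 0" using c w(1) by (cases n) auto
  have X: "X = proj (cross3 n (0,0,1))"
  proof -
    have "X = proj (cross3 (smul3 c n) (smul3 1 (0,0,1)))"
      using L(2) w(2) c by (simp add: lineT_def meet_proj)
    also have "\<dots> = proj (cross3 n (0,0,1))" unfolding cross3_smul using c0 by (simp add: proj_smul)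
    finally show ?thesis .
  qed
  define E where "E = r1^(q^2)*r2 - r1*r2^(q^2)"
  have Eq: "E^q = r1*r2^q - r1^q*r2"
    unfolding E_def by (simp add: subq power_mult_distrib fixqq)
  have Eqq: "E^(q^2) = r1^q*r2^(q^2) - r1^(q^2)*r2^q"
    by (simp flip: powqq add: Eq subq power_mult_distrib)
  have nE: "n = (\<theta>*E^(q^2), \<theta>^(q+1)*\<theta>*E, \<theta>^(q+1)*E^q)"
    unfolding Eq Eqq unfolding n_def v1_def v2_def cross3_def E_def by (simp add: algebra_simps)
  have E0: "E \<noteq> 0"
  proof
    assume "E = 0"
    then show False using nz nE q2 by simp
  qed
  have Xe: "X = proj (\<theta>^(q+1)*\<theta>*E, -(\<theta>*E^(q^2)), 0)"
    using X nE by (simp add: cross3_def)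
  define s where "s = E^(q+1)/\<theta>"
  have s0: "s \<noteq> 0" using E0 th s_def by simp
  have sq: "s^q = E^(q^2)*E^q/\<theta>^q"
    unfolding s_def by (simp add: power_divide power_mult_distrib flip: powqq)
  have "proj (s*(-(\<theta>^2)), s^q, 0) = X"
    unfolding Xe proj_eq_iff
  proof (intro exI[of _ "- (\<theta>^(q+1))/E^q"] conjI)
    show "- (\<theta>^(q+1))/E^q \<noteq> 0" using th E0 by simp
    show "(\<theta>^(q+1)*\<theta>*E, -(\<theta>*E^(q^2)), 0) = smul3 (- (\<theta>^(q+1))/E^q) (s*(-(\<theta>^2)), s^q, 0)"
      unfolding sq using th E0 by (simp add: s_def field_simps power2_eq_square)
  qed
  then show "X \<in> S_set q (- (\<theta>^2))" using s0 unfolding S_set_def by blast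
qed

lemma splash_sup:
  assumes th: "\<theta> \<noteq> (0::'a)"
  shows "S_set q (- (\<theta>^2)) \<subseteq> splash q (Pi_set q \<theta>)"
proof
  fix X assume "X \<in> S_set q (- (\<theta>^2))"
  then obtain s where s: "s \<noteq> 0" "X = proj (s*(-(\<theta>^2)), s^q, 0)" unfolding S_set_def by blast
  define l where "l = 1/(s*\<theta>)"
  have l0: "l \<noteq> 0" using s th l_def by simp
  define w where "w = (l/\<theta>^(q+1), l^q, l^(q^2)/\<theta>)"
  define L where "L = proj w"
  define Tr where "Tr = (\<lambda>x::'a. x + x^q + x^(q^2))"
  define vP where "vP = (\<lambda>r::'a. (r*\<theta>^(q+1), r^q, r^(q^2)*\<theta>))"
  have w0: "w \<noteq> (0,0,0)" using l0 w_def by simp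
  have dotw: "dot3 (vP r) w = Tr (l*r)" for r
    unfolding vP_def w_def Tr_def dot3_def using th by (simp add: power_mult_distrib field_simps)
  have meetL: "meet L lineT = X"
  proof -
    have "meet L lineT = proj (l^q, -(l/\<theta>^(q+1)), 0)"
      unfolding L_def lineT_def meet_proj w_def by (simp add: cross3_def)
    also have "\<dots> = X" unfolding s(2) proj_eq_iff
    proof (intro exI[of _ "- (s^(q+1)*\<theta>^(q+2))"] conjI)
      show "- (s^(q+1)*\<theta>^(q+2)) \<noteq> 0" using s th by simp
      show "(s*(-(\<theta>^2)), s^q, 0) = smul3 (- (s^(q+1)*\<theta>^(q+2))) (l^q, -(l/\<theta>^(q+1)), 0)"
        unfolding l_def using s th by (simp add: power_divide power_mult_distrib field_simps power2_eq_square)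
    qed
    finally show ?thesis .
  qed
  define K where "K = {r::'a. Tr (l*r) = 0}"
  have cK: "card K = q^2"
  proof -
    have "K = (\<lambda>x. x/l) ` {x::'a. x + x^q + x^(q^2) = 0}"
    proof (intro set_eqI iffI)
      fix r assume "r \<in> K"
      then show "r \<in> (\<lambda>x. x/l) ` {x::'a. x + x^q + x^(q^2) = 0}"
        unfolding K_def Tr_def using l0 by (intro image_eqI[of _ _ "l*r"]) auto
    next
      fix r assume "r \<in> (\<lambda>x. x/l) ` {x::'a. x + x^q + x^(q^2) = 0}"
      then show "r \<in> K" unfolding K_def Tr_def using l0 by auto
    qed
    moreover have "inj_on (\<lambda>x. x/l) {x::'a. x + x^q + x^(q^2) = 0}"
      using l0 by (intro inj_onI) simp
    ultimately show ?thesis using Kcard by (simp add: card_image)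
  qed
  have K0: "0 \<in> K" unfolding K_def Tr_def using q2 by (simp add: power_0_left)
  have cK': "card (K - {0}) = q^2 - 1" using cK K0 by (simp add: card_Diff_singleton)
  define G0 where "G0 = {c::'a. c \<noteq> 0 \<and> c^q = c}"
  have cG0: "card G0 = q - 1" unfolding G0_def by (rule Gcard)
  have Aeq: "{P \<in> Pi_set q \<theta>. incid P L} = (\<lambda>r. proj (vP r)) ` (K - {0})"
  proof (intro set_eqI iffI)
    fix P assume "P \<in> {P \<in> Pi_set q \<theta>. incid P L}"
    then obtain r where r: "r \<noteq> 0" "P = proj (vP r)" "incid P L"
      unfolding Pi_set_def vP_def by blast
    then have "r \<in> K - {0}" unfolding K_def L_def using dotw by (simp add: incid_proj)
    then show "P \<in> (\<lambda>r. proj (vP r)) ` (K - {0})" using r by blast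
  next
    fix P assume "P \<in> (\<lambda>r. proj (vP r)) ` (K - {0})"
    then obtain r where r: "r \<in> K" "r \<noteq> 0" "P = proj (vP r)" by blast
    then have "incid P L" unfolding K_def L_def using dotw by (simp add: incid_proj)
    moreover have "P \<in> Pi_set q \<theta>" unfolding Pi_set_def using r vP_def by blast
    ultimately show "P \<in> {P \<in> Pi_set q \<theta>. incid P L}" by blast
  qed
  have fib: "card {r' \<in> K - {0}. proj (vP r') = proj (vP r)} = q - 1" if r: "r \<in> K - {0}" for r
  proof -
    have r0: "r \<noteq> 0" using r by simp
    have "{r' \<in> K - {0}. proj (vP r') = proj (vP r)} = (\<lambda>c. c*r) ` G0"
    proof (intro set_eqI iffI)
      fix r' assume "r' \<in> {r' \<in> K - {0}. proj (vP r') = proj (vP r)}"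
      then have "proj (vP r) = proj (vP r')" by simp
      then obtain c where c: "c \<noteq> 0" "vP r' = smul3 c (vP r)" unfolding proj_eq_iff by blast
      then have e1: "r' = c*r" "r'^q = c*r^q" unfolding vP_def using th by auto
      then have "c^q * r^q = c * r^q" by (simp add: power_mult_distrib)
      then have "c^q = c" using r0 by simp
      then show "r' \<in> (\<lambda>c. c*r) ` G0" using c e1 unfolding G0_def by blast
    next
      fix r' assume "r' \<in> (\<lambda>c. c*r) ` G0"
      then obtain c where c: "c \<noteq> 0" "c^q = c" "r' = c*r" unfolding G0_def by blast
      have cqq: "c^(q^2) = c" using c(2) powqq[of c] by simp
      have "Tr (l*r') = c * Tr (l*r)" unfolding Tr_def c(3)
        by (simp add: power_mult_distrib c(2) cqq algebra_simps)
      then have "r' \<in> K - {0}" using r c r0 unfolding K_def by simp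
      moreover have "vP r' = smul3 c (vP r)" unfolding vP_def c(3)
        by (simp add: power_mult_distrib c(2) cqq algebra_simps)
      ultimately show "r' \<in> {r' \<in> K - {0}. proj (vP r') = proj (vP r)}"
        using c(1) by (simp add: proj_smul)
    qed
    moreover have "inj_on (\<lambda>c. c*r) G0" using r0 by (intro inj_onI) simp
    ultimately show ?thesis using cG0 by (simp add: card_image)
  qed
  have "card (K - {0}) = (q - 1) * card ((\<lambda>r. proj (vP r)) ` (K - {0}))"
    by (rule fiber_count) (use fib in auto)
  moreover have "q^2 - 1 = (q - 1) * (q + 1)"
  proof -
    obtain r where r: "q = Suc r" using q2 by (cases q) auto
    show ?thesis unfolding r by (simp add: algebra_simps power2_eq_square)
  qed
  ultimately have "(q - 1) * (q + 1) = (q - 1) * card ((\<lambda>r. proj (vP r)) ` (K - {0}))"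
    using cK' by simp
  moreover have "q - 1 \<noteq> 0" using q2 by simp
  ultimately have "q + 1 = card ((\<lambda>r. proj (vP r)) ` (K - {0}))"
    using mult_left_cancel by blast
  then have "card {P \<in> Pi_set q \<theta>. incid P L} = q + 1" using Aeq by simp
  moreover have "L \<in> pg_lines" unfolding L_def pg_lines_def using w0 by blast
  ultimately have "L \<in> plane_lines q (Pi_set q \<theta>)" unfolding plane_lines_def by blast
  then show "X \<in> splash q (Pi_set q \<theta>)" unfolding splash_def using meetL by blast
qed

end

lemma card_times_zero: "of_nat (card (UNIV::'a::{field,finite} set)) * (a::'a) = 0"
proof -
  have "(\<Sum>x\<in>(UNIV::'a set). x) = (\<Sum>x\<in>UNIV. x + a)"
    by (rule sum.reindex_bij_witness[of _ "\<lambda>y. y + a" "\<lambda>y. y - a"]) auto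
  also have "\<dots> = (\<Sum>x\<in>UNIV. x) + of_nat (card (UNIV::'a set)) * a"
    by (simp add: sum.distrib)
  finally show ?thesis by simp
qed

lemma power_card_same: "(x::'a::{field,finite}) ^ card (UNIV :: 'a set) = x"
proof (cases "x = 0")
  case False
  have "x * (\<Prod>y\<in>UNIV-{0}. x * y) = x * x ^ (card (UNIV :: 'a set) - 1) * \<Prod>(UNIV-{0})"
    by (simp add: prod.distrib mult_ac)
  also have "x * x ^ (card (UNIV :: 'a set) - 1) = x ^ Suc (card (UNIV :: 'a set) - 1)"
    by (subst power_Suc) auto
  also have "Suc (card (UNIV :: 'a set) - 1) = card (UNIV :: 'a set)"
    using finite_UNIV_card_ge_0[where ?'a = 'a] by simp
  also have "(\<Prod>y\<in>UNIV-{0}. x * y) = (\<Prod>y\<in>UNIV-{0}. y)"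
    by (rule prod.reindex_bij_witness[of _ "\<lambda>y. y / x" "\<lambda>y. x * y"]) (use False in auto)
  finally show ?thesis
    by simp
qed (use finite_UNIV_card_ge_0[where ?'a = 'a] in auto)

lemma char_setup:
  fixes q :: nat
  assumes "prime p" "k > 0" "q = p ^ k" "card (UNIV :: 'a::{field,finite} set) = q ^ 3"
  shows "\<And>x y::'a. (x+y)^q = x^q + y^q"
proof -
  have pos: "CHAR('a) > 0" by (rule finite_imp_CHAR_pos) simp
  have pr: "prime CHAR('a)" by (rule prime_CHAR_semidom[OF pos])
  have "of_nat (card (UNIV::'a set)) = (0::'a)" using card_times_zero[of "1::'a"] by simp
  moreover have "card (UNIV::'a set) = p ^ (k*3)" using assms(3,4) by (simp add: power_mult)
  ultimately have "CHAR('a) dvd p ^ (k*3)"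
    using of_nat_eq_0_iff_char_dvd by metis
  then have "CHAR('a) dvd p" using pr prime_dvd_power by blast
  then have cp: "CHAR('a) = p" using pr assms(1) primes_dvd_imp_eq by blast
  fix x y :: 'a
  show "(x+y)^q = x^q + y^q"
    by (rule freshmans_dream'[where n=k]) (use pr cp assms(3) in auto)
qed



theorem theorem5p1:
  fixes q :: nat and \<theta> :: "'a::{field,finite}"
  assumes "\<exists>p k. prime p \<and> k > 0 \<and> q = p ^ k"
    and "card (UNIV :: 'a set) = q ^ 3"
    and "\<theta> \<noteq> 0"
  shows "projection (Pi_set q \<theta>) = S_set q (\<theta>^2)
       \<and> splash q (Pi_set q \<theta>) = S_set q (- (\<theta>^2))"
proof -
  obtain p k where pk: "prime p" "k > 0" "q = p ^ k" using assms(1) by blast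
  have addq: "\<And>x y::'a. (x+y)^q = x^q + y^q" by (rule char_setup[OF pk assms(2)])
  have fix3: "\<And>x::'a. x^(q^3) = x" using power_card_same assms(2) by metis
  have "2 \<le> p" using pk(1) by (simp add: prime_ge_2_nat)
  obtain j where j: "k = Suc j" using pk(2) by (cases k) auto
  have "1 \<le> p ^ j" using \<open>2 \<le> p\<close> by simp
  then have "p * 1 \<le> p * p ^ j" by (rule mult_le_mono2)
  moreover have "q = p * p ^ j" using pk(3) j by simp
  ultimately have q2: "q \<ge> 2" using \<open>2 \<le> p\<close> by linarith
  show ?thesis
    using proj_part[OF addq fix3 q2 assms(2) assms(3)]
      splash_sub[OF addq fix3 q2 assms(2) assms(3)]
      splash_sup[OF addq fix3 q2 assms(2) assms(3)] by blast
qed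

end
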